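(* Let $k\ge 1$ be an integer and let $F(z,u)=\sum_{P} z^{\mathrm{up}(P)}u^{\mathrm{end}(P)}$, where the sum runs over all nonempty $k$-Dyck prefixes $P$ whose last step is an up-step, $\mathrm{up}(P)$ is the number of up-steps of $P$ and $\mathrm{end}(P)$ is the height at which $P$ ends. Then, as formal power series in $z$ (with coefficients polynomials in $u$), $$F(z,u)=zu^k\,\frac{\overline{u}-u}{1-u+zu^{k+1}},$$ where $$\overline{u}=\sum_{\ell\ge0}\frac1{1+\ell(k+1)}\binom{1+\ell(k+1)}{\ell}z^\ell$$ is the power series solution of $1-\overline{u}+z\overline{u}^{k+1}=0$.
   Context: Fix an integer $k\ge1$. A $k$-Dyck prefix is a lattice path starting at $(0,0)$ using up-steps $(1,k)$ and down-steps $(1,-1)$ that never goes below the $x$-axis. The height (level) of a point is its $y$-coordinate. *)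

theory Defs
  imports "HOL-Computational_Algebra.Computational_Algebra"
begin

text \<open>A path is a list of steps; True = up-step (1,k), False = down-step (1,-1).\<close>

definition step_height :: "nat \<Rightarrow> bool \<Rightarrow> int" where
  "step_height k s = (if s then int k else -1)"

definition path_height :: "nat \<Rightarrow> bool list \<Rightarrow> int" where
  "path_height k P = sum_list (map (step_height k) P)"

definition is_kdyck_prefix :: "nat \<Rightarrow> bool list \<Rightarrow> bool" where
  "is_kdyck_prefix k P = (\<forall>i\<le>length P. path_height k (take i P) \<ge> 0)"

definition num_up :: "bool list \<Rightarrow> nat" where
  "num_up P = length (filter id P)"

definition F_paths :: "nat \<Rightarrow> nat \<Rightarrow> bool list set" where
  "F_paths k n = {P. is_kdyck_prefix k P \<and> P \<noteq> [] \<and> last P \<and> num_up P = n}"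

definition F_gf :: "nat \<Rightarrow> rat poly fps" where
  "F_gf k = Abs_fps (\<lambda>n. \<Sum>P\<in>F_paths k n. monom 1 (nat (path_height k P)))"

text \<open>The variable u, as a constant power series.\<close>
definition U :: "rat poly fps" where
  "U = fps_const [:0, 1:]"

definition ubar :: "nat \<Rightarrow> rat poly fps" where
  "ubar k = Abs_fps (\<lambda>l. [: of_nat ((1 + l*(k+1)) choose l) / of_nat (1 + l*(k+1)) :])"

end

theory Submission
  imports Defs
begin


definition AA :: "nat \<Rightarrow> nat \<Rightarrow> nat \<Rightarrow> rat" where
  "AA p m n = (if m = 0 then (if n = 0 then 1 else 0)
      else of_nat m / of_nat (m + p*n) * of_nat ((m + p*n) choose n))"

lemma AA_0: "m \<ge> 1 \<Longrightarrow> AA p m 0 = 1" by (simp add: AA_def)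

lemma AA_alt: "AA p m n = (if m = 0 \<and> n = 0 then 1 else of_nat m / of_nat (m + p*n) * of_nat ((m + p*n) choose n))"
  by (simp add: AA_def)

lemma key_field:
  fixes M P n N c :: rat
  assumes "N = M + P*n" "N \<noteq> 0" "N - 1 \<noteq> 0"
  shows "M / N * c = (M-1)/(N-1) * ((N-n)*c/N) + (M+P-1)/(N-1) * (n*c/N)"
proof -
  have e: "(M-1) * (N-n) + (M+P-1)*n = M*(N-1)" using assms(1) by (simp add: algebra_simps)
  have "(M-1)/(N-1) * ((N-n)*c/N) + (M+P-1)/(N-1) * (n*c/N) = ((M-1) * (N-n) + (M+P-1)*n) * c/((N-1)*N)"
    by (simp add: add_divide_distrib distrib_right)
  also have "\<dots> = M*(N-1)*c/((N-1)*N)" by (simp only: e)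
  also have "\<dots> = M / N * c" using assms by simp
  finally show ?thesis by simp
qed

lemma key_id:
  fixes m p n N :: nat
  assumes "m \<ge> 1" "n \<ge> 1" "p \<ge> 1" "N = m + p*n"
  shows "(of_nat m / of_nat N * of_nat (N choose n) :: rat) =
     of_nat (m-1) / of_nat (N-1) * of_nat ((N-1) choose n) +
     of_nat (m+p-1) / of_nat (N-1) * of_nat ((N-1) choose (n-1))"
proof -
  have N2: "N \<ge> 2" using assms by (metis add_le_mono le_trans mult_le_mono one_add_one mult_1)
  have h1: "of_nat N * of_nat ((N-1) choose n) = (of_nat N - of_nat n) * (of_nat (N choose n) :: rat)"
  proof -
    have "(N - n) * (N choose n) = N * ((N - 1) choose n)" by (rule binomial_absorb_comp)
    hence "of_nat ((N - n) * (N choose n)) = (of_nat (N * ((N - 1) choose n)) :: rat)" by simp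
    moreover have "n \<le> N" using assms by (metis le_add2 le_trans mult_le_mono1 mult_1)
    ultimately show ?thesis by (simp add: of_nat_diff)
  qed
  have h2: "of_nat N * of_nat ((N-1) choose (n-1)) = of_nat n * (of_nat (N choose n) :: rat)"
  proof -
    obtain n' where n': "n = Suc n'" using assms by (cases n) auto
    have "Suc n' * (N choose Suc n') = N * ((N - 1) choose n')" by (rule binomial_absorption)
    hence "of_nat (Suc n' * (N choose Suc n')) = (of_nat (N * ((N - 1) choose n')) :: rat)" by simp
    thus ?thesis using n' by (simp add: algebra_simps)
  qed
  define c where "c = (of_nat (N choose n) :: rat)"
  define c1 where "c1 = (of_nat ((N-1) choose n) :: rat)"
  define c2 where "c2 = (of_nat ((N-1) choose (n-1)) :: rat)"
  have Npos: "(of_nat N :: rat) \<noteq> 0" "(of_nat (N-1) :: rat) \<noteq> 0" using N2 by auto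
  have e1: "c1 = (of_nat N - of_nat n) * c / of_nat N" using h1 Npos unfolding c1_def c_def
    by (simp add: field_simps)
  have e2: "c2 = of_nat n * c / of_nat N" using h2 Npos unfolding c2_def c_def
    by (simp add: field_simps)
  have m1: "(of_nat (m-1) :: rat) = of_nat m - 1" using assms by (simp add: of_nat_diff)
  have m2: "(of_nat (m+p-1) :: rat) = of_nat m + of_nat p - 1" using assms by (simp add: of_nat_diff)
  have N1: "(of_nat (N-1) :: rat) = of_nat N - 1" using N2 by (simp add: of_nat_diff)
  have NN: "(of_nat N :: rat) = of_nat m + of_nat p * of_nat n" using assms by simp
  show ?thesis unfolding c_def[symmetric] c1_def[symmetric] c2_def[symmetric]
    unfolding e1 e2 m1 m2
    unfolding N1 by (rule key_field[OF NN]) (use Npos N1 in auto)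
qed

lemma AA_rec:
  assumes "m \<ge> 1" "n \<ge> 1" "p \<ge> 1"
  shows "AA p m n = AA p (m-1) n + AA p (m+p-1) (n-1)"
proof -
  define N where "N = m + p*n"
  have a1: "AA p m n = of_nat m / of_nat N * of_nat (N choose n)"
    using assms unfolding N_def by (simp add: AA_alt)
  have "m - 1 + p*n = N - 1" using assms unfolding N_def by simp
  hence a2: "AA p (m-1) n = of_nat (m-1) / of_nat (N-1) * of_nat ((N-1) choose n)"
    using assms by (simp add: AA_alt)
  have "m + p - 1 + p*(n-1) = N - 1" using assms unfolding N_def
    by (simp add: diff_mult_distrib2)
  hence a3: "AA p (m+p-1) (n-1) = of_nat (m+p-1) / of_nat (N-1) * of_nat ((N-1) choose (n-1))"
    using assms by (simp add: AA_alt)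
  show ?thesis unfolding a1 a2 a3 by (rule key_id) (use assms N_def in auto)
qed

definition EE :: "(rat \<Rightarrow> 'a::comm_ring_1) \<Rightarrow> nat \<Rightarrow> nat \<Rightarrow> 'a fps" where
  "EE h p m = Abs_fps (\<lambda>n. h (AA p m n))"

lemma EE_0:
  assumes "h 0 = 0" "h 1 = 1"
  shows "EE h p 0 = 1"
  by (rule fps_ext) (simp add: EE_def AA_def assms)

lemma EE_rec:
  assumes hadd: "\<And>x y. h (x + y) = h x + h y" and "p \<ge> 1"
  shows "EE h p (Suc a) = EE h p a + fps_X * EE h p (a+p)"
proof (rule fps_ext)
  fix n show "EE h p (Suc a) $ n = (EE h p a + fps_X * EE h p (a+p)) $ n"
  proof (cases n)
    case 0 thus ?thesis by (simp add: EE_def AA_def)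
  next
    case (Suc n')
    have "AA p (Suc a) n = AA p a n + AA p (a+p) n'"
      using AA_rec[of "Suc a" n p] Suc assms by simp
    thus ?thesis using Suc by (simp add: EE_def hadd)
  qed
qed

lemma uniq2:
  fixes f g :: "nat \<Rightarrow> nat \<Rightarrow> 'a::comm_ring_1"
  assumes f: "\<And>a n. f (Suc a) n = f a n + (if n = 0 then 0 else f (a+p) (n-1))"
    and g: "\<And>a n. g (Suc a) n = g a n + (if n = 0 then 0 else g (a+p) (n-1))"
    and b: "\<And>n. f 0 n = g 0 n"
  shows "f a n = g a n"
proof (induction n arbitrary: a)
  case 0
  show ?case by (induction a) (simp_all add: f g b)
next
  case (Suc n)
  show ?case by (induction a) (simp_all add: f g b Suc)
qed

lemma EE_mult:
  assumes hadd: "\<And>x y. h (x + y) = h x + h y" and h0: "h 0 = 0" and h1: "h 1 = 1" and "p \<ge> 1"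
  shows "EE h p a * EE h p b = EE h p (a+b)"
proof (rule fps_ext)
  fix n
  show "(EE h p a * EE h p b) $ n = EE h p (a+b) $ n"
  proof (rule uniq2[where f = "\<lambda>a n. (EE h p a * EE h p b) $ n" and g = "\<lambda>a n. EE h p (a+b) $ n" and p = p])
    fix a n
    show "(EE h p (Suc a) * EE h p b) $ n = (EE h p a * EE h p b) $ n +
      (if n = 0 then 0 else (EE h p (a+p) * EE h p b) $ (n-1))"
      unfolding EE_rec[OF hadd assms(4)] by (simp add: distrib_right mult.assoc)
    show "EE h p (Suc a + b) $ n = EE h p (a+b) $ n +
      (if n = 0 then 0 else EE h p (a+p+b) $ (n-1))"
      using EE_rec[OF hadd assms(4), of "a+b"] by (simp add: add.commute add.left_commute)
    fix n show "(EE h p 0 * EE h p b) $ n = EE h p (0+b) $ n" by (simp add: EE_0 h0 h1)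
  qed
qed

lemma EE_pow:
  assumes hadd: "\<And>x y. h (x + y) = h x + h y" and h0: "h 0 = 0" and h1: "h 1 = 1" and "p \<ge> 1"
  shows "EE h p 1 ^ m = EE h p m"
proof (induction m)
  case 0 thus ?case by (simp add: EE_0 h0 h1)
next
  case (Suc m) thus ?case using EE_mult[OF assms, of 1 m] by simp
qed

lemma EE_eq:
  assumes hadd: "\<And>x y. h (x + y) = h x + h y" and h0: "h 0 = 0" and h1: "h 1 = 1" and "p \<ge> 1"
  shows "1 - EE h p 1 + fps_X * EE h p 1 ^ p = 0"
  using EE_rec[OF hadd assms(4), of 0] EE_pow[OF assms, of p] EE_0[OF h0 h1] by simp



lemma ph_append [simp]: "path_height k (xs @ ys) = path_height k xs + path_height k ys"
  by (simp add: path_height_def)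
lemma ph_Nil [simp]: "path_height k [] = 0" by (simp add: path_height_def)
lemma ph_single [simp]: "path_height k [x] = step_height k x" by (simp add: path_height_def)
lemma ph_repF [simp]: "path_height k (replicate j False) = - int j"
  by (induction j) (simp_all add: path_height_def step_height_def)
lemma nu_append [simp]: "num_up (xs @ ys) = num_up xs + num_up ys" by (simp add: num_up_def)
lemma nu_repF [simp]: "num_up (replicate j False) = 0" by (simp add: num_up_def)
lemma nu_Nil [simp]: "num_up [] = 0" by (simp add: num_up_def)
lemma nu_single [simp]: "num_up [x] = (if x then 1 else 0)" by (simp add: num_up_def)

lemma kd_Nil [simp]: "is_kdyck_prefix k []" by (simp add: is_kdyck_prefix_def)

lemma kd_snoc: "is_kdyck_prefix k (xs @ [x]) \<longleftrightarrow> is_kdyck_prefix k xs \<and> path_height k (xs @ [x]) \<ge> 0"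
proof -
  have "(\<forall>i\<le>length (xs @ [x]). path_height k (take i (xs @ [x])) \<ge> 0) \<longleftrightarrow>
        (\<forall>i\<le>length xs. path_height k (take i xs) \<ge> 0) \<and> path_height k (xs @ [x]) \<ge> 0"
    (is "?L \<longleftrightarrow> ?R")
  proof
    assume L: ?L
    have "path_height k (take i xs) \<ge> 0" if "i \<le> length xs" for i
      using L[rule_format, of i] that by simp
    moreover have "path_height k (xs @ [x]) \<ge> 0" using L[rule_format, of "Suc (length xs)"] by simp
    ultimately show ?R by blast
  next
    assume R: ?R
    show ?L
    proof (intro allI impI)
      fix i assume "i \<le> length (xs @ [x])"
      hence "i \<le> length xs \<or> i = Suc (length xs)" by auto
      thus "path_height k (take i (xs @ [x])) \<ge> 0"
        using R by (auto simp del: ph_append)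
    qed
  qed
  thus ?thesis unfolding is_kdyck_prefix_def .
qed

lemma kd_height: "is_kdyck_prefix k Q \<Longrightarrow> path_height k Q \<ge> 0"
  unfolding is_kdyck_prefix_def by (metis order_refl take_all)

lemma kd_repF: "is_kdyck_prefix k (Q @ replicate j False) \<longleftrightarrow> is_kdyck_prefix k Q \<and> int j \<le> path_height k Q"
proof (induction j)
  case 0 thus ?case using kd_height by auto
next
  case (Suc j)
  have "Q @ replicate (Suc j) False = (Q @ replicate j False) @ [False]"
    by (simp add: replicate_append_same)
  thus ?case using Suc by (simp only: kd_snoc) (auto simp: step_height_def)
qed

lemma kd_ext: "is_kdyck_prefix k (Q @ replicate j False @ [True]) \<longleftrightarrow> is_kdyck_prefix k Q \<and> int j \<le> path_height k Q"
  using kd_snoc[of k "Q @ replicate j False" True] kd_repF[of k Q j]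
  by (auto simp: step_height_def)

definition good :: "bool list \<Rightarrow> bool" where "good Q = (Q = [] \<or> last Q)"

lemma decomp: "\<exists>Q j. R = Q @ replicate j False \<and> good Q"
proof (induction R rule: rev_induct)
  case Nil thus ?case by (rule exI[of _ "[]"], rule exI[of _ 0]) (simp add: good_def)
next
  case (snoc x R)
  show ?case
  proof (cases x)
    case True thus ?thesis by (intro exI[of _ "R @ [x]"] exI[of _ 0]) (simp add: good_def)
  next
    case False
    from snoc obtain Q j where "R = Q @ replicate j False" "good Q" by blast
    thus ?thesis using False
      by (intro exI[of _ Q] exI[of _ "Suc j"]) (simp add: replicate_append_same)
  qed
qed

lemma good_tw: "good Q \<Longrightarrow> length (takeWhile Not (rev (Q @ replicate j False))) = j"
proof -
  assume g: "good Q"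
  have "takeWhile Not (rev Q) = []"
  proof (cases Q rule: rev_cases)
    case Nil thus ?thesis by simp
  next
    case (snoc ys y) thus ?thesis using g by (simp add: good_def)
  qed
  moreover have "rev (Q @ replicate j False) = replicate j False @ rev Q" by simp
  moreover have "takeWhile Not (replicate j False @ rev Q) = replicate j False @ takeWhile Not (rev Q)"
    by (rule takeWhile_append2) auto
  ultimately show ?thesis by simp
qed

lemma good_inj: "good Q1 \<Longrightarrow> good Q2 \<Longrightarrow> Q1 @ replicate j1 False = Q2 @ replicate j2 False \<Longrightarrow> Q1 = Q2 \<and> j1 = j2"
proof -
  assume a: "good Q1" "good Q2" and e: "Q1 @ replicate j1 False = Q2 @ replicate j2 False"
  have "j1 = j2" using good_tw[OF a(1), of j1] good_tw[OF a(2), of j2] e by simp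
  thus ?thesis using e by simp
qed

definition G :: "nat \<Rightarrow> nat \<Rightarrow> bool list set" where
  "G k n = {P. is_kdyck_prefix k P \<and> good P \<and> num_up P = n}"

definition ext :: "bool list \<times> nat \<Rightarrow> bool list" where
  "ext x = fst x @ replicate (snd x) False @ [True]"

lemma F_paths_Suc: "F_paths k (Suc n) = ext ` Sigma (G k n) (\<lambda>Q. {..nat (path_height k Q)})"
proof (intro equalityI subsetI)
  fix P assume "P \<in> F_paths k (Suc n)"
  hence P: "is_kdyck_prefix k P" "P \<noteq> []" "last P" "num_up P = Suc n" by (auto simp: F_paths_def)
  have "P = butlast P @ [True]" using append_butlast_last_id[OF P(2)] P(3) by simp
  moreover obtain Q j where Qj: "butlast P = Q @ replicate j False" "good Q" using decomp by blast
  ultimately have PE: "P = Q @ replicate j False @ [True]" by simp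
  hence "is_kdyck_prefix k Q" "int j \<le> path_height k Q" using P(1) kd_ext by auto
  moreover have "num_up Q = n" using P(4) PE by simp
  ultimately have "(Q, j) \<in> Sigma (G k n) (\<lambda>Q. {..nat (path_height k Q)})"
    using Qj by (auto simp: G_def)
  thus "P \<in> ext ` Sigma (G k n) (\<lambda>Q. {..nat (path_height k Q)})"
    using PE by (force simp: ext_def)
next
  fix P assume "P \<in> ext ` Sigma (G k n) (\<lambda>Q. {..nat (path_height k Q)})"
  then obtain Q j where Q: "Q \<in> G k n" "j \<le> nat (path_height k Q)" and PE: "P = Q @ replicate j False @ [True]"
    by (auto simp: ext_def)
  have "path_height k Q \<ge> 0" using Q(1) kd_height by (auto simp: G_def)
  hence "int j \<le> path_height k Q" using Q(2) by (simp add: le_nat_iff)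
  thus "P \<in> F_paths k (Suc n)" using Q PE kd_ext by (auto simp: F_paths_def G_def)
qed

lemma ext_inj: "inj_on ext (Sigma (G k n) (\<lambda>Q. {..nat (path_height k Q)}))"
proof (rule inj_onI)
  fix x y assume x: "x \<in> Sigma (G k n) (\<lambda>Q. {..nat (path_height k Q)})"
    and y: "y \<in> Sigma (G k n) (\<lambda>Q. {..nat (path_height k Q)})" and e: "ext x = ext y"
  have "fst x @ replicate (snd x) False = fst y @ replicate (snd y) False"
    using e unfolding ext_def by (metis append_assoc append1_eq_conv)
  moreover have "good (fst x)" "good (fst y)" using x y by (auto simp: G_def)
  ultimately show "x = y" using good_inj by (metis prod.collapse)
qed

lemma G_0: "G k 0 = {[]}"
proof -
  have "P = []" if "good P" "num_up P = 0" for P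
  proof (rule ccontr)
    assume "P \<noteq> []"
    have a: "last P \<in> set P" using \<open>P \<noteq> []\<close> by (rule last_in_set)
    have a2: "last P" using that(1) \<open>P \<noteq> []\<close> by (simp add: good_def)
    have "\<exists>x\<in>set P. id x" by (rule bexI[OF _ a]) (simp add: a2)
    hence "filter id P \<noteq> []" by (simp add: filter_empty_conv)
    thus False using that(2) by (simp add: num_up_def)
  qed
  thus ?thesis by (auto simp: G_def good_def)
qed

lemma F_paths_0: "F_paths k 0 = {}"
proof -
  have False if "P \<noteq> []" "last P" "num_up P = 0" for P
  proof -
    have "last P \<in> set P" using that(1) by (rule last_in_set)
    hence "filter id P \<noteq> []" using that(2) by (auto simp: filter_empty_conv)
    thus False using that(3) by (simp add: num_up_def)
  qed
  thus ?thesis unfolding F_paths_def by blast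
qed

lemma G_Suc: "G k (Suc n) = F_paths k (Suc n)"
  by (auto simp: G_def F_paths_def good_def)

lemma G_finite: "finite (G k n)"
proof (induction n)
  case 0 thus ?case by (simp add: G_0)
next
  case (Suc n) thus ?case unfolding G_Suc F_paths_Suc by auto
qed



abbreviation xx :: "rat poly" where "xx \<equiv> [:0,1:]"

lemma monom1: "monom (1::rat) m = xx ^ m" by (simp add: monom_altdef)

lemma geo: "(\<Sum>j\<le>H. (y::'a::comm_ring_1) ^ (H - j + k)) * (1 - y) = y^k - y^(H+1+k)"
proof (induction H)
  case 0 show ?case by (simp add: algebra_simps)
next
  case (Suc H)
  have "(\<Sum>j\<le>Suc H. y ^ (Suc H - j + k)) = y^(Suc H + k) + (\<Sum>j\<le>H. y ^ (H - j + k))"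
    by (subst sum.atMost_Suc_shift) simp
  hence "(\<Sum>j\<le>Suc H. y ^ (Suc H - j + k)) * (1 - y) = y^(Suc H + k) * (1 - y) + (y^k - y^(H+1+k))"
    using Suc by (simp add: distrib_right)
  also have "\<dots> = y^k - y^(Suc H+1+k)"
    by (simp add: algebra_simps)
  finally show ?case .
qed

definition Fn :: "nat \<Rightarrow> nat \<Rightarrow> rat poly" where
  "Fn k n = (\<Sum>P\<in>F_paths k n. xx ^ nat (path_height k P))"

lemma F_gf_nth: "F_gf k $ n = Fn k n"
  by (simp add: F_gf_def Fn_def monom1)

lemma Fn_0: "Fn k 0 = 0" by (simp add: Fn_def F_paths_0)

lemma h_ext: "path_height k (ext (Q, j)) = path_height k Q - int j + int k"
  by (simp add: ext_def step_height_def)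

lemma Fn_Suc: "Fn k (Suc n) = (\<Sum>Q\<in>G k n. \<Sum>j\<le>nat (path_height k Q). xx ^ (nat (path_height k Q) - j + k))"
proof -
  have "Fn k (Suc n) = (\<Sum>x\<in>Sigma (G k n) (\<lambda>Q. {..nat (path_height k Q)}). xx ^ nat (path_height k (ext x)))"
    unfolding Fn_def F_paths_Suc by (rule sum.reindex[OF ext_inj, unfolded comp_def])
  also have "\<dots> = (\<Sum>Q\<in>G k n. \<Sum>j\<le>nat (path_height k Q). xx ^ nat (path_height k (ext (Q,j))))"
    using sum.Sigma[of "G k n" "\<lambda>Q. {..nat (path_height k Q)}" "\<lambda>Q j. xx ^ nat (path_height k (ext (Q,j)))"] G_finite
    by (simp add: split_def)
  also have "\<dots> = (\<Sum>Q\<in>G k n. \<Sum>j\<le>nat (path_height k Q). xx ^ (nat (path_height k Q) - j + k))"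
  proof (intro sum.cong refl)
    fix Q j assume "Q \<in> G k n" "j \<in> {..nat (path_height k Q)}"
    moreover have "path_height k Q \<ge> 0" using \<open>Q \<in> G k n\<close> kd_height by (auto simp: G_def)
    then obtain H where H: "path_height k Q = int H" using nonneg_int_cases by blast
    ultimately have "j \<le> H" by simp
    hence "int H - int j + int k = int (H - j + k)" by (simp add: of_nat_diff)
    hence "nat (path_height k (ext (Q,j))) = nat (path_height k Q) - j + k"
      unfolding h_ext H by (simp only: nat_int)
    thus "xx ^ nat (path_height k (ext (Q,j))) = xx ^ (nat (path_height k Q) - j + k)" by (rule arg_cong)
  qed
  finally show ?thesis .
qed

lemma sum_geo_aux: "(\<Sum>Q\<in>A. (y::'a::comm_ring_1)^k - y^(f Q + 1 + k)) = of_nat (card A) * y^k - y^(k+1) * (\<Sum>Q\<in>A. y^(f Q))"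
proof -
  have "(\<Sum>Q\<in>A. y^(f Q + 1 + k)) = (\<Sum>Q\<in>A. y^(k+1) * y^(f Q))"
    by (rule sum.cong[OF refl]) (simp add: power_add mult_ac)
  thus ?thesis by (simp add: sum_subtractf sum_distrib_left)
qed

definition cc :: "nat \<Rightarrow> nat \<Rightarrow> nat" where "cc k n = card (G k n)"

lemma sumG: "(\<Sum>Q\<in>G k n. xx ^ nat (path_height k Q)) = Fn k n + (if n = 0 then 1 else 0)"
proof (cases n)
  case 0 thus ?thesis by (simp add: G_0 Fn_0)
next
  case (Suc m) thus ?thesis by (simp add: G_Suc Fn_def)
qed

lemma recR: "Fn k (Suc n) * (1 - xx) + xx^(k+1) * Fn k n
   = xx^k * (of_nat (cc k n) - (if n = 0 then xx else 0))"
proof -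
  have "Fn k (Suc n) * (1 - xx) = (\<Sum>Q\<in>G k n. (\<Sum>j\<le>nat (path_height k Q). xx ^ (nat (path_height k Q) - j + k)) * (1 - xx))"
    unfolding Fn_Suc by (rule sum_distrib_right)
  also have "\<dots> = (\<Sum>Q\<in>G k n. xx^k - xx^(nat (path_height k Q) + 1 + k))"
    by (rule sum.cong[OF refl]) (rule geo)
  also have "\<dots> = of_nat (cc k n) * xx^k - xx^(k+1) * (\<Sum>Q\<in>G k n. xx ^ nat (path_height k Q))"
    unfolding cc_def by (rule sum_geo_aux)
  finally have A: "Fn k (Suc n) * (1 - xx) = of_nat (cc k n) * xx^k - xx^(k+1) * (Fn k n + (if n = 0 then 1 else 0))"
    unfolding sumG .
  have g: "\<And>(a::rat poly) b c y e. a*(1-y) = c*y^k - y^(k+1)*(b+e) \<Longrightarrow> a*(1-y) + y^(k+1)*b = y^k*c - y^(k+1)*e"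
  proof -
    fix a b c y e :: "rat poly"
    assume A: "a*(1-y) = c*y^k - y^(k+1)*(b+e)"
    have "c*y^k - y^(k+1)*(b+e) + y^(k+1)*b = y^k*c - y^(k+1)*e" by (simp add: algebra_simps)
    thus "a*(1-y) + y^(k+1)*b = y^k*c - y^(k+1)*e" by (simp only: A)
  qed
  have h: "\<And>(y::rat poly) c. y^k*(c - (if n = 0 then y else 0)) = y^k*c - y^(k+1)*(if n = 0 then 1 else 0)"
    by (cases "n = 0") (simp_all add: algebra_simps)
  have B: "Fn k (Suc n) * (1 - xx) + xx^(k+1) * Fn k n = xx^k * of_nat (cc k n) - xx^(k+1) * (if n = 0 then 1 else 0)"
    by (rule g[OF A])
  show ?thesis by (rule trans[OF B h[symmetric]])
qed



lemma telesc:
  fixes f c :: "nat \<Rightarrow> 'a::comm_ring_1" and x s :: 'a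
  assumes f0: "f 0 = 0"
    and R: "\<And>n. f (Suc n) * (1 - s) + s^(k+1) * f n = s^k * (c n - (if n = 0 then s else 0))"
  shows "(\<Sum>n<Suc N. x^n * f n) * (1 - s + x*s^(k+1)) + x^(Suc N) * f (Suc N) * (1 - s)
         = x * s^k * ((\<Sum>n<Suc N. x^n * c n) - s)"
proof (induction N)
  case 0
  have "f 1 * (1 - s) = s^k * (c 0 - s)" using R[of 0] f0 by simp
  moreover have "(\<Sum>n<Suc 0. x^n * f n) = 0" using f0 by simp
  moreover have "\<And>z. 0 * z + x^(Suc 0) * f (Suc 0) * (1 - s) = x * (f 1 * (1 - s))" by (simp add: algebra_simps)
  moreover have "(\<Sum>n<Suc 0. x^n * c n) = c 0" by simp
  moreover have "x * (s^k * (c 0 - s)) = x * s^k * (c 0 - s)" by (simp add: algebra_simps)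
  ultimately show ?case by metis
next
  case (Suc N)
  define A where "A = (\<Sum>n<Suc N. x^n * f n)"
  define B where "B = (\<Sum>n<Suc N. x^n * c n)"
  have RN: "f (Suc (Suc N)) * (1 - s) + s^(k+1) * f (Suc N) = s^k * c (Suc N)" using R[of "Suc N"] by simp
  have IH: "A * (1 - s + x*s^(k+1)) + x^(Suc N) * f (Suc N) * (1 - s) = x * s^k * (B - s)"
    using Suc unfolding A_def B_def .
  have "(\<Sum>n<Suc (Suc N). x^n * f n) = A + x^(Suc N) * f (Suc N)" unfolding A_def by simp
  moreover have "(\<Sum>n<Suc (Suc N). x^n * c n) = B + x^(Suc N) * c (Suc N)" unfolding B_def by simp
  moreover have "(A + x^(Suc N) * f (Suc N)) * (1 - s + x*s^(k+1)) + x^(Suc (Suc N)) * f (Suc (Suc N)) * (1 - s)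
     = (A * (1 - s + x*s^(k+1)) + x^(Suc N) * f (Suc N) * (1 - s)) + x^(Suc (Suc N)) * (f (Suc (Suc N)) * (1 - s) + s^(k+1) * f (Suc N))"
    by (simp add: algebra_simps)
  moreover have "x * s^k * (B + x^(Suc N) * c (Suc N) - s) = x * s^k * (B - s) + x^(Suc (Suc N)) * (s^k * c (Suc N))"
    by (simp add: algebra_simps)
  ultimately show ?case by (simp only: IH RN)
qed

definition mp :: "rat poly \<Rightarrow> rat fps poly" where "mp q = map_poly fps_const q"

lemma mp_add: "mp (p + q) = mp p + mp q"
  by (intro poly_eqI) (simp add: mp_def coeff_map_poly)
lemma mp_diff: "mp (p - q) = mp p - mp q"
  by (intro poly_eqI) (simp add: mp_def coeff_map_poly)
lemma mp_smult: "mp (smult a q) = smult (fps_const a) (mp q)"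
  by (intro poly_eqI) (simp add: mp_def coeff_map_poly)
lemma mp_pCons: "mp (pCons a q) = pCons (fps_const a) (mp q)"
  by (simp add: mp_def map_poly_pCons)
lemma mp_0: "mp 0 = 0" by (simp add: mp_def)
lemma mp_mult: "mp (p * q) = mp p * mp q"
proof (induction p)
  case 0 thus ?case by (simp add: mp_0)
next
  case (pCons a p)
  have "mp (pCons a p * q) = mp (smult a q) + mp (pCons 0 (p * q))" by (simp add: mp_add)
  also have "\<dots> = smult (fps_const a) (mp q) + pCons 0 (mp p * mp q)"
    by (simp add: mp_smult mp_pCons pCons.IH)
  also have "\<dots> = mp (pCons a p) * mp q" by (simp add: mp_pCons)
  finally show ?case .
qed
lemma mp_power: "mp (p ^ n) = mp p ^ n"
proof (induction n)
  case 0 thus ?case by (simp add: mp_def)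
next
  case (Suc n) thus ?case by (simp only: power_Suc mp_mult)
qed
lemma mp_const: "mp [:a:] = [:fps_const a:]" by (simp add: mp_pCons mp_0)
lemma mp_xx: "mp xx = [:0, 1:]" by (simp add: mp_pCons mp_0)
lemma mp_1: "mp 1 = 1" by (simp add: mp_def)

definition SS :: "nat \<Rightarrow> rat fps" where "SS k = EE id (k+1) 1"

lemma SS_eq: "1 - SS k + fps_X * SS k ^ (k+1) = 0"
  unfolding SS_def by (rule EE_eq) auto

lemma SS_0: "SS k $ 0 = 1" by (simp add: SS_def EE_def AA_def)

definition Pm :: "nat \<Rightarrow> rat poly \<Rightarrow> rat fps" where "Pm k q = poly (mp q) (SS k)"

lemma recP: "Pm k (Fn k (Suc n)) * (1 - SS k) + SS k^(k+1) * Pm k (Fn k n)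
   = SS k^k * (fps_const (of_nat (cc k n)) - (if n = 0 then SS k else 0))"
proof -
  have "Pm k (Fn k (Suc n) * (1 - xx) + xx^(k+1) * Fn k n)
     = Pm k (xx^k * (of_nat (cc k n) - (if n = 0 then xx else 0)))"
    using recR by simp
  moreover have "Pm k (Fn k (Suc n) * (1 - xx) + xx^(k+1) * Fn k n)
     = Pm k (Fn k (Suc n)) * (1 - SS k) + SS k^(k+1) * Pm k (Fn k n)"
    unfolding Pm_def by (simp only: mp_add mp_mult mp_diff mp_power mp_xx mp_1 poly_add poly_mult poly_diff poly_power poly_1) simp
  moreover have "Pm k (xx^k * (of_nat (cc k n) - (if n = 0 then xx else 0)))
     = SS k^k * (fps_const (of_nat (cc k n)) - (if n = 0 then SS k else 0))"
  proof -
    have a: "mp (if n = 0 then xx else 0) = (if n = 0 then [:0,1:] else 0)" by (simp add: mp_xx mp_0)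
    have b: "mp (of_nat (cc k n)) = [:fps_const (of_nat (cc k n)):]" by (simp only: of_nat_poly mp_const)
    have c: "poly (if n = 0 then [:0,1:] else 0) (SS k) = (if n = 0 then SS k else 0)" by simp
    show ?thesis unfolding Pm_def
      by (simp only: mp_mult mp_diff mp_power mp_xx a b poly_mult poly_diff poly_power c) simp
  qed
  ultimately show ?thesis by simp
qed

lemma Csum_nth: "(\<Sum>n<M. fps_X^n * fps_const (a n :: rat)) $ j = (if j < M then a j else 0)"
proof -
  have "(\<Sum>n<M. fps_X^n * fps_const (a n)) $ j = (\<Sum>n<M. (if n = j then a j else 0))"
    unfolding fps_sum_nth by (rule sum.cong[OF refl]) (auto simp: fps_X_power_mult_nth)
  also have "\<dots> = (if j < M then a j else 0)" by (simp add: sum.delta')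
  finally show ?thesis .
qed

lemma cc_eq: "of_nat (cc k m) = SS k $ m"
proof -
  define s where "s = SS k"
  define f where "f = (\<lambda>n. Pm k (Fn k n))"
  define c where "c = (\<lambda>n. fps_const (of_nat (cc k n) :: rat))"
  define D where "D = Abs_fps (\<lambda>m. of_nat (cc k m)) - s"
  have f0: "f 0 = 0" by (simp add: f_def Fn_0 Pm_def mp_0)
  have R: "\<And>n. f (Suc n) * (1 - s) + s^(k+1) * f n = s^k * (c n - (if n = 0 then s else 0))"
    unfolding f_def c_def s_def by (rule recP)
  have s0: "s $ 0 = 1" unfolding s_def by (rule SS_0)
  have Z: "(s^k * D) $ N = 0" for N
  proof -
    have T: "(\<Sum>n<Suc N. fps_X^n * f n) * (1 - s + fps_X*s^(k+1)) + fps_X^(Suc N) * f (Suc N) * (1 - s)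
         = fps_X * s^k * ((\<Sum>n<Suc N. fps_X^n * c n) - s)"
      by (rule telesc[OF f0 R])
    hence T2: "fps_X^(Suc N) * (f (Suc N) * (1 - s)) = fps_X * (s^k * ((\<Sum>n<Suc N. fps_X^n * c n) - s))"
      using SS_eq[of k] unfolding s_def by (simp add: mult.assoc)
    have "(fps_X^(Suc N) * (f (Suc N) * (1 - s))) $ Suc N = 0"
      by (subst fps_X_power_mult_nth) (simp add: s0)
    hence "(s^k * ((\<Sum>n<Suc N. fps_X^n * c n) - s)) $ N = 0"
      using arg_cong[OF T2, of "\<lambda>F. F $ Suc N"] by simp
    moreover have "(s^k * ((\<Sum>n<Suc N. fps_X^n * c n) - s)) $ N = (s^k * D) $ N"
      unfolding fps_mult_nth
    proof (rule sum.cong[OF refl])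
      fix i assume "i \<in> {0..N}"
      hence "((\<Sum>n<Suc N. fps_X^n * c n) - s) $ (N - i) = D $ (N - i)"
        unfolding c_def D_def by (simp add: Csum_nth)
      thus "(s^k) $ i * ((\<Sum>n<Suc N. fps_X^n * c n) - s) $ (N - i) = (s^k) $ i * D $ (N - i)" by simp
    qed
    ultimately show ?thesis by simp
  qed
  hence "s^k * D = 0" by (intro fps_ext) simp
  moreover have "s^k \<noteq> 0"
  proof
    assume "s^k = 0"
    hence "(s^k) $ 0 = 0" by simp
    thus False using s0 by (simp add: fps_power_zeroth)
  qed
  ultimately have "D = 0" using no_zero_divisors by blast
  hence "D $ m = 0" by simp
  thus ?thesis unfolding D_def s_def by simp
qed

lemma ubar_EE: "ubar k = EE (\<lambda>x. [:x:]) (k+1) 1"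
  by (rule fps_ext) (simp add: ubar_def EE_def AA_def mult.commute)

lemma ubar_nth: "ubar k $ m = of_nat (cc k m)"
proof -
  have "ubar k $ m = [:AA (k+1) 1 m:]" by (simp add: ubar_EE EE_def)
  also have "AA (k+1) 1 m = SS k $ m" by (simp add: SS_def EE_def)
  also have "\<dots> = of_nat (cc k m)" by (rule cc_eq[symmetric])
  finally show ?thesis by (simp add: of_nat_poly)
qed

theorem mainTheorem1:
  fixes k :: nat
  assumes "k \<ge> 1"
  shows "1 - ubar k + fps_X * ubar k ^ (k+1) = 0
       \<and> F_gf k * (1 - U + fps_X * U ^ (k+1)) = fps_X * U ^ k * (ubar k - U)"
proof
  show "1 - ubar k + fps_X * ubar k ^ (k+1) = 0"
    unfolding ubar_EE by (rule EE_eq) (auto simp: one_pCons)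
next
  have e1: "1 - U + fps_X * U ^ (k+1) = fps_const (1 - xx) + fps_X * fps_const (xx^(k+1))"
    unfolding U_def by (simp add: fps_const_power)
  have e2: "fps_X * U ^ k * (ubar k - U) = fps_X * (fps_const (xx^k) * (ubar k - fps_const xx))"
    unfolding U_def by (simp add: fps_const_power mult.assoc)
  have e3: "F_gf k * (fps_const (1 - xx) + fps_X * fps_const (xx^(k+1)))
     = F_gf k * fps_const (1 - xx) + fps_X * (F_gf k * fps_const (xx^(k+1)))"
    by (simp add: algebra_simps)
  show "F_gf k * (1 - U + fps_X * U ^ (k+1)) = fps_X * U ^ k * (ubar k - U)"
    unfolding e1 e2 e3
  proof (rule fps_ext)
    fix n
    show "(F_gf k * fps_const (1 - xx) + fps_X * (F_gf k * fps_const (xx^(k+1)))) $ n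
       = (fps_X * (fps_const (xx^k) * (ubar k - fps_const xx))) $ n"
    proof (cases n)
      case 0 thus ?thesis by (simp add: F_gf_nth Fn_0)
    next
      case (Suc m)
      have L: "(F_gf k * fps_const (1 - xx) + fps_X * (F_gf k * fps_const (xx^(k+1)))) $ n
         = Fn k (Suc m) * (1 - xx) + Fn k m * xx^(k+1)"
        using Suc by (simp only: fps_add_nth fps_mult_right_const_nth fps_X_mult_nth F_gf_nth) simp
      have Rr: "(fps_X * (fps_const (xx^k) * (ubar k - fps_const xx))) $ n
         = xx^k * (of_nat (cc k m) - (if m = 0 then xx else 0))"
        using Suc by (simp only: fps_X_mult_nth fps_mult_left_const_nth fps_sub_nth ubar_nth) simp
      show ?thesis unfolding L Rr using recR[of k m] by (simp only: mult.commute)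
    qed
  qed
qed


end
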